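(* Let $n\ge2$ and $\mathbf{F}\in\mathbb{R}^n$ with $F_k>0$ for all $k$ and $F_k\ge F_{k+1}$ for $3\le k\le n-1$. Let $U_i=\frac{i}{3/F_1+\sum_{k=2}^i1/F_k}$ and $V_i=\frac{i-1}{\sum_{k=1}^i1/F_k}$ for $2\le i\le n$; let $u$ be the least index in $\arg\max_{2\le i\le n}U_i$ and $v$ the least index in $\arg\max_{2\le i\le n}V_i$. Assume $U_u\ge V_v$. Define $\boldsymbol\mu\in\mathbb{R}^n$ by $\mu_1=\frac12-\frac{U_u}{F_1}$, $\mu_k=1-\frac{U_u}{F_k}$ for $3\le k\le u$, and $\mu_k=0$ otherwise. Then: (1) $\mu_k\ge0$ for all $1\le k\le n$; (2) $F_1(\frac12-\mu_1)=F_2\big(\frac12+3\mu_1+\sum_{i=3}^u\mu_i\big)=F_k(1-\mu_k)=U_u$ for all $3\le k\le u$; (3) $F_k\le U_u$ for all $u+1\le k\le n$.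
   Context: Note $U_u=\frac{u}{3/F_1+\sum_{k=2}^u1/F_k}$. *)

theory Defs
  imports Complex_Main
begin

text \<open>Vectors F in R^n are represented as functions nat => real, indexed 1..n.\<close>

definition U :: "(nat \<Rightarrow> real) \<Rightarrow> nat \<Rightarrow> real" where
  "U F i = real i / (3 / F 1 + (\<Sum>k=2..i. 1 / F k))"

definition V :: "(nat \<Rightarrow> real) \<Rightarrow> nat \<Rightarrow> real" where
  "V F i = (real i - 1) / (\<Sum>k=1..i. 1 / F k)"

definition least_argmax :: "(nat \<Rightarrow> real) \<Rightarrow> nat \<Rightarrow> nat" where
  "least_argmax G n = (LEAST i. 2 \<le> i \<and> i \<le> n \<and> (\<forall>j. 2 \<le> j \<and> j \<le> n \<longrightarrow> G j \<le> G i))"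

definition mu :: "(nat \<Rightarrow> real) \<Rightarrow> nat \<Rightarrow> nat \<Rightarrow> real" where
  "mu F n k = (let u = least_argmax (U F) n in
     if k = 1 then 1/2 - U F u / F 1
     else if 3 \<le> k \<and> k \<le> u then 1 - U F u / F k
     else 0)"

end

theory Submission
  imports Defs
begin

lemma la_props:
  fixes G :: "nat \<Rightarrow> real"
  assumes "2 \<le> n"
  shows "2 \<le> least_argmax G n \<and> least_argmax G n \<le> n \<and>
         (\<forall>j. 2 \<le> j \<and> j \<le> n \<longrightarrow> G j \<le> G (least_argmax G n)) \<and>
         (\<forall>j. 2 \<le> j \<and> j < least_argmax G n \<longrightarrow> G j < G (least_argmax G n))"
proof -
  let ?P = "\<lambda>i. 2 \<le> i \<and> i \<le> n \<and> (\<forall>j. 2 \<le> j \<and> j \<le> n \<longrightarrow> G j \<le> G i)"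
  have fin: "finite (G ` {2..n})" and ne: "G ` {2..n} \<noteq> {}" using assms by auto
  obtain i where i: "i \<in> {2..n}" "G i = Max (G ` {2..n})" using Max_in[OF fin ne] by auto
  have "?P i" using i fin by auto
  hence P: "?P (least_argmax G n)" unfolding least_argmax_def by (rule LeastI)
  have "\<forall>j. 2 \<le> j \<and> j < least_argmax G n \<longrightarrow> G j < G (least_argmax G n)"
  proof (intro allI impI)
    fix j assume j: "2 \<le> j \<and> j < least_argmax G n"
    have "\<not> ?P j" using not_less_Least j unfolding least_argmax_def by blast
    then obtain i' where "2 \<le> i'" "i' \<le> n" "G j < G i'" using j P by force
    then show "G j < G (least_argmax G n)" using P by force
  qed
  with P show ?thesis by blast
qed

lemma chain:
  fixes F :: "nat \<Rightarrow> real"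
  assumes "\<And>k. 3 \<le> k \<Longrightarrow> k \<le> n - 1 \<Longrightarrow> F k \<ge> F (k + 1)"
    and "3 \<le> k" "k \<le> m" "m \<le> n"
  shows "F m \<le> F k"
  using assms(3,4)
proof (induction m rule: dec_induct)
  case base then show ?case by simp
next
  case (step m')
  have "F (m' + 1) \<le> F m'" using assms(1)[of m'] step assms(2) by auto
  then show ?case using step by simp
qed

lemma h1: fixes x S u :: real assumes "x>0" "S>0" "u \<ge> 0" "(u+1)/(S+1/x) \<le> u/S" shows "x \<le> u/S"
proof -
  have "S + 1/x > 0" using assms by (intro add_pos_pos) auto
  hence "(u+1) * S \<le> u * (S + 1/x)" using assms(4) assms(2) by (simp add: divide_simps mult.commute)
  hence "S \<le> u / x" by (simp add: algebra_simps)
  thus ?thesis using assms by (simp add: field_simps)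
qed
lemma h2: fixes x S w :: real assumes "x>0" "S>0" "w \<ge> 0" "w/S < (w+1)/(S+1/x)" shows "(w+1)/(S+1/x) < x"
proof -
  have p: "S + 1/x > 0" using assms by (intro add_pos_pos) auto
  hence "w * (S + 1/x) < (w+1) * S" using assms(4) assms(2) by (simp add: divide_simps mult.commute)
  hence "w / x < S" by (simp add: algebra_simps)
  hence "w < S * x" using assms by (simp add: field_simps)
  hence "w + 1 < x * (S + 1/x)" using assms by (simp add: algebra_simps)
  thus ?thesis using p by (simp add: divide_simps)
qed

lemma h3: fixes a b c d :: real assumes "b > 0" "d > 0" "a / b \<le> c / d" shows "a * d \<le> c * b"
  using assms by (simp add: divide_simps mult.commute)

theorem lemma8:
  fixes F :: "nat \<Rightarrow> real" and n :: nat
  assumes "n \<ge> 2"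
    and "\<And>k. 1 \<le> k \<Longrightarrow> k \<le> n \<Longrightarrow> F k > 0"
    and "\<And>k. 3 \<le> k \<Longrightarrow> k \<le> n - 1 \<Longrightarrow> F k \<ge> F (k + 1)"
    and "U F (least_argmax (U F) n) \<ge> V F (least_argmax (V F) n)"
  shows "(\<forall>k. 1 \<le> k \<and> k \<le> n \<longrightarrow> mu F n k \<ge> 0)
    \<and> (let u = least_argmax (U F) n in
         F 1 * (1/2 - mu F n 1) = U F u
       \<and> F 2 * (1/2 + 3 * mu F n 1 + (\<Sum>i=3..u. mu F n i)) = U F u
       \<and> (\<forall>k. 3 \<le> k \<and> k \<le> u \<longrightarrow> F k * (1 - mu F n k) = U F u)
       \<and> (\<forall>k. u + 1 \<le> k \<and> k \<le> n \<longrightarrow> F k \<le> U F u))"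
proof -
  define u where "u = least_argmax (U F) n"
  define v where "v = least_argmax (V F) n"
  define U0 where "U0 = U F u"
  define S where "S i = 3 / F 1 + (\<Sum>k=2..i. 1 / F k)" for i
  have hu: "2 \<le> u" "u \<le> n" "\<And>j. 2 \<le> j \<Longrightarrow> j \<le> n \<Longrightarrow> U F j \<le> U0"
    "\<And>j. 2 \<le> j \<Longrightarrow> j < u \<Longrightarrow> U F j < U0"
    using la_props[OF assms(1), of "U F"] unfolding u_def U0_def by auto
  have hv: "V F u \<le> U0"
    using la_props[OF assms(1), of "V F"] hu(1,2) assms(4) unfolding v_def U0_def u_def
    by fastforce
  have F1: "F 1 > 0" using assms(1,2) by auto
  have F2: "F 2 > 0" using assms(1,2) by auto
  have Spos: "S i > 0" if "i \<le> n" for i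
  proof -
    have "(\<Sum>k=2..i. 1 / F k) \<ge> 0"
    proof (intro sum_nonneg)
      fix x assume "x \<in> {2..i}" then show "1 / F x \<ge> 0" using that assms(2)[of x] by simp
    qed
    thus ?thesis using F1 unfolding S_def by (smt (verit) divide_pos_pos)
  qed
  have Ueq: "U F i = real i / S i" for i unfolding U_def S_def by simp
  have SSuc: "S (Suc i) = S i + 1 / F (Suc i)" if "1 \<le> i" for i
    using that unfolding S_def by (simp add: sum.cl_ivl_Suc)
  have U0S: "U0 * S u = real u" using Spos[OF hu(2)] unfolding U0_def Ueq by simp
  have mu_eq: "mu F n k = (if k = 1 then 1/2 - U0 / F 1 else if 3 \<le> k \<and> k \<le> u then 1 - U0 / F k else 0)" for k
    by (simp add: mu_def u_def U0_def Let_def)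
  have Fu1: "F (u+1) \<le> U0" if "u < n"
  proof -
    have "U F (Suc u) \<le> U0" using hu that by auto
    hence "real (Suc u) / (S u + 1 / F (Suc u)) \<le> real u / S u"
      using SSuc[of u] hu(1) unfolding Ueq U0_def by simp
    moreover have "S u > 0" using Spos hu by auto
    moreover have "F (Suc u) > 0" using assms(2) that by auto
    ultimately have "F (Suc u) \<le> real u / S u"
      using h1[of "F (Suc u)" "S u" "real u"] by (simp add: add.commute)
    thus ?thesis unfolding U0_def Ueq by simp
  qed
  have p3: "\<forall>k. u + 1 \<le> k \<and> k \<le> n \<longrightarrow> F k \<le> U0"
  proof (intro allI impI)
    fix k assume k: "u + 1 \<le> k \<and> k \<le> n"
    have "F k \<le> F (u+1)" using chain[where F=F and n=n, OF assms(3), of "u+1" k] k hu(1) by auto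
    thus "F k \<le> U0" using Fu1 k by auto
  qed
  have Fu: "F u > U0" if "3 \<le> u"
  proof -
    define w where "w = u - 1"
    have w: "u = Suc w" "2 \<le> w" using that unfolding w_def by auto
    have "U F w < U0" using hu(4)[of w] w by auto
    hence "real w / S w < real (Suc w) / (S w + 1 / F (Suc w))"
      using SSuc[of w] w unfolding Ueq U0_def by simp
    moreover have "S w > 0" using Spos hu w by auto
    moreover have "F (Suc w) > 0" using assms(2) hu w by auto
    ultimately have "F (Suc w) > real (Suc w) / (S w + 1 / F (Suc w))"
      using h2[of "F (Suc w)" "S w" "real w"] by (simp add: add.commute)
    thus ?thesis using SSuc[of w] w unfolding U0_def Ueq by simp
  qed
  have mu1: "U0 / F 1 \<le> 1/2"
  proof -
    define T where "T = (\<Sum>k=1..u. 1 / F k)"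
    have Tsplit: "T = 1 / F 1 + (\<Sum>k=2..u. 1 / F k)"
    proof -
      have "{1..u} = insert 1 {2..u}" using hu(1) by auto
      thus ?thesis unfolding T_def by simp
    qed
    have Tpos: "T > 0"
    proof -
      have "(\<Sum>k=2..u. 1 / F k) \<ge> 0"
      proof (intro sum_nonneg)
        fix x assume "x \<in> {2..u}" then show "1 / F x \<ge> 0" using hu assms(2)[of x] by simp
      qed
      thus ?thesis using Tsplit F1 by (smt (verit) divide_pos_pos)
    qed
    have SuT: "S u = 2 / F 1 + T" unfolding S_def Tsplit by simp
    have Vu: "V F u = (real u - 1) / T" unfolding V_def T_def by (rule refl)
    have U0e: "U0 = real u / (2 / F 1 + T)" unfolding U0_def Ueq SuT by (rule refl)
    have "(real u - 1) / T \<le> real u / (2 / F 1 + T)"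
      using hv unfolding Vu U0e .
    moreover have "2 / F 1 + T > 0" using Tpos F1 by (intro add_pos_pos) auto
    ultimately have "(real u - 1) * (2 / F 1 + T) \<le> real u * T"
      using Tpos h3 by blast
    hence "2 * (real u - 1) / F 1 \<le> T" by (simp add: algebra_simps)
    hence "2 * real u / F 1 \<le> 2 / F 1 + T" by (simp add: diff_divide_distrib)
    hence "2 * real u / F 1 \<le> S u" using SuT by simp
    hence "2 * (U0 * S u) / F 1 \<le> S u" using U0S by simp
    hence "2 * U0 / F 1 * S u \<le> 1 * S u" by simp
    hence "2 * U0 / F 1 \<le> 1" using Spos[OF hu(2)] by (simp only: mult_le_cancel_right_pos)
    thus ?thesis by (simp add: mult.commute)
  qed
  have p1: "\<forall>k. 1 \<le> k \<and> k \<le> n \<longrightarrow> mu F n k \<ge> 0"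
  proof (intro allI impI)
    fix k assume k: "1 \<le> k \<and> k \<le> n"
    show "mu F n k \<ge> 0"
    proof (cases "k = 1")
      case True then show ?thesis using mu1 mu_eq by simp
    next
      case False
      note k1 = False
      show ?thesis
      proof (cases "3 \<le> k \<and> k \<le> u")
        case True
        have "F u \<le> F k" using chain[where F=F and n=n, OF assms(3), of k u] True hu by auto
        hence "U0 \<le> F k" using Fu True by auto
        moreover have "F k > 0" using assms(2) k by auto
        ultimately show ?thesis using mu_eq True k1 by simp
      next
        case False
        then show ?thesis using k1 by (auto simp add: mu_eq)
      qed
    qed
  qed
  have p2a: "F 1 * (1/2 - mu F n 1) = U0" using F1 by (simp add: mu_eq)
  have p2c: "\<forall>k. 3 \<le> k \<and> k \<le> u \<longrightarrow> F k * (1 - mu F n k) = U0"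
  proof (intro allI impI)
    fix k assume k: "3 \<le> k \<and> k \<le> u"
    have "F k > 0" using assms(2) k hu by auto
    thus "F k * (1 - mu F n k) = U0" using k by (simp add: mu_eq)
  qed
  have p2b: "F 2 * (1/2 + 3 * mu F n 1 + (\<Sum>i=3..u. mu F n i)) = U0"
  proof -
    have "(\<Sum>i=3..u. mu F n i) = (\<Sum>i=3..u. 1 - U0 * (1 / F i))"
      by (intro sum.cong) (auto simp: mu_eq)
    also have "\<dots> = (real u - 2) - U0 * (\<Sum>i=3..u. 1 / F i)"
      using hu(1) by (simp add: sum_subtractf sum_distrib_left of_nat_diff)
    finally have s: "(\<Sum>i=3..u. mu F n i) = (real u - 2) - U0 * (\<Sum>i=3..u. 1 / F i)" .
    have Su: "S u = 3 / F 1 + 1 / F 2 + (\<Sum>i=3..u. 1 / F i)"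
    proof -
      have "{2..u} = insert 2 {3..u}" using hu(1) by auto
      thus ?thesis unfolding S_def by simp
    qed
    have "1/2 + 3 * mu F n 1 + (\<Sum>i=3..u. mu F n i) = real u - U0 * (S u - 1 / F 2)"
      unfolding s Su by (simp add: mu_eq algebra_simps)
    also have "\<dots> = U0 / F 2" using U0S by (simp add: algebra_simps)
    finally show ?thesis using F2 by simp
  qed
  show ?thesis using p1 p2a p2b p2c p3 unfolding Let_def u_def[symmetric] U0_def by simp
qed

end
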